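(* Let $n\ge1$, $m\ge n$, and ${\sf A}_k(\mathbf u)$ as defined in the context. (i) For $\mathbf t=(t_0,\dots,t_m)$ put $h(\mathbf t;\mathbf u)=\sum_{k=0}^m t_k p_k(\mathbf u)$ and ${\sf H}(\mathbf t;\mathbf u)=\sum_{k=0}^m t_k{\sf A}_k(\mathbf u)$. Then ${\sf H}$ is upper triangular with $({\sf H})_{i,j}=\frac{\partial^{\,j-i}h}{\partial u_1^{\,j-i}}$ for $i\le j$, and the critical point equations $\frac{\partial\Phi}{\partial y_i}(\mathbf t;\mathbf u)=0$ ($i=1,\dots,n$) for $\Phi(\mathbf t;\mathbf y)=\sum_{k=0}^m t_kp_{k+1}(\mathbf y)$ hold if and only if ${\sf H}(\mathbf t;\mathbf u)=0$. (ii) For every $\mathbf u\in\mathbb C^n$, setting $t_i=(-1)^i e_{n-i}(\mathbf u)$ for $i=0,1,\dots,n$ and $t_k=0$ for $n<k\le m$ gives ${\sf H}(\mathbf t;\mathbf u)=0$, where $e_j(\mathbf u):=(-1)^j p_j(-\mathbf u)$.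
   Context: The elementary Schur polynomials $p_k(\mathbf u)$, $\mathbf u=(u_1,\dots,u_n)$, are defined by $\exp\big(\sum_{i=1}^n u_i z^i\big)=\sum_{k\ge 0}p_k(\mathbf u)z^k$, with $p_k=0$ for $k<0$. ${\sf A}_k(\mathbf u)$ is the $n\times n$ matrix with $({\sf A}_k)_{i,j}=p_{k-j+i}(\mathbf u)$ for $i\le j$ and $0$ for $i>j$. *)

theory Defs
  imports "HOL-Analysis.Analysis" "HOL-Computational_Algebra.Formal_Power_Series"
begin

text \<open>Vectors u = (u_1,...,u_n) are functions nat => complex; only the values at 1..n matter.\<close>
definition schur_p :: "nat \<Rightarrow> (nat \<Rightarrow> complex) \<Rightarrow> int \<Rightarrow> complex" where
  "schur_p n u k = (if k < 0 then 0 else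
     fps_nth (fps_exp 1 oo (\<Sum>i=1..n. fps_const (u i) * fps_X ^ i)) (nat k))"

definition schur_A :: "nat \<Rightarrow> nat \<Rightarrow> (nat \<Rightarrow> complex) \<Rightarrow> nat \<Rightarrow> nat \<Rightarrow> complex" where
  "schur_A n k u i j = (if i \<le> j then schur_p n u (int k - int j + int i) else 0)"

definition schur_h :: "nat \<Rightarrow> nat \<Rightarrow> (nat \<Rightarrow> complex) \<Rightarrow> (nat \<Rightarrow> complex) \<Rightarrow> complex" where
  "schur_h n m t u = (\<Sum>k=0..m. t k * schur_p n u (int k))"

definition schur_H :: "nat \<Rightarrow> nat \<Rightarrow> (nat \<Rightarrow> complex) \<Rightarrow> (nat \<Rightarrow> complex) \<Rightarrow> nat \<Rightarrow> nat \<Rightarrow> complex" where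
  "schur_H n m t u i j = (\<Sum>k=0..m. t k * schur_A n k u i j)"

definition schur_Phi :: "nat \<Rightarrow> nat \<Rightarrow> (nat \<Rightarrow> complex) \<Rightarrow> (nat \<Rightarrow> complex) \<Rightarrow> complex" where
  "schur_Phi n m t y = (\<Sum>k=0..m. t k * schur_p n y (int k + 1))"

definition partial_var :: "nat \<Rightarrow> ((nat \<Rightarrow> complex) \<Rightarrow> complex) \<Rightarrow> (nat \<Rightarrow> complex) \<Rightarrow> complex" where
  "partial_var i g u = deriv (\<lambda>x. g (u(i := x))) (u i)"

definition schur_e :: "nat \<Rightarrow> (nat \<Rightarrow> complex) \<Rightarrow> nat \<Rightarrow> complex" where
  "schur_e n u j = (-1) ^ j * schur_p n (\<lambda>i. - u i) (int j)"

end

theory Submission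
  imports Defs
begin
unbundle no vec_syntax
notation fps_nth (infixl "$" 75)


definition SS :: "nat \<Rightarrow> (nat \<Rightarrow> complex) \<Rightarrow> complex fps" where
  "SS n u = (\<Sum>i=1..n. fps_const (u i) * fps_X ^ i)"

definition EE :: "nat \<Rightarrow> (nat \<Rightarrow> complex) \<Rightarrow> complex fps" where
  "EE n u = fps_exp 1 oo SS n u"

lemma P_def2: "schur_p n u k = (if k < 0 then 0 else EE n u $ nat k)"
  unfolding schur_p_def EE_def SS_def by simp

lemma SS0: "SS n u $ 0 = 0"
  unfolding SS_def fps_sum_nth by simp

lemma SS_nth: "SS n u $ k = (if 1 \<le> k \<and> k \<le> n then u k else 0)"
proof -
  have "SS n u $ k = (\<Sum>i=1..n. if k = i then u i else 0)"
    unfolding SS_def fps_sum_nth by (rule sum.cong) auto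
  then show ?thesis by (simp add: sum.delta)
qed

lemma exp_deriv_gen: "G $ 0 = 0 \<Longrightarrow> fps_deriv (fps_exp (1::complex) oo G) = fps_deriv G * (fps_exp 1 oo G)"
  by (simp add: fps_compose_deriv)

lemma EE_deriv: "fps_deriv (EE n u) = fps_deriv (SS n u) * EE n u"
  unfolding EE_def by (rule exp_deriv_gen[OF SS0])

lemma EE0: "EE n u $ 0 = 1" unfolding EE_def by simp

lemma P_neg: "k < 0 \<Longrightarrow> schur_p n u k = 0" by (simp add: P_def2)
lemma P_0: "schur_p n u 0 = 1" by (simp add: P_def2 EE0)

lemma recur_nat: "of_nat (Suc k) * EE n u $ Suc k =
   (\<Sum>i=1..n. of_nat i * u i * schur_p n u (int (Suc k) - int i))"
proof -
  have "of_nat (Suc k) * EE n u $ Suc k = fps_deriv (EE n u) $ k" by simp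
  also have "\<dots> = (\<Sum>a=0..k. of_nat (a+1) * SS n u $ (a+1) * EE n u $ (k - a))"
    by (simp add: EE_deriv fps_mult_nth)
  also have "\<dots> = (\<Sum>a=0..k. if a < n then of_nat (a+1) * u (a+1) * EE n u $ (k - a) else 0)"
    by (rule sum.cong) (auto simp: SS_nth)
  also have "\<dots> = (\<Sum>a\<in>{0..k} \<inter> {..<n}. of_nat (a+1) * u (a+1) * EE n u $ (k - a))"
    by (subst sum.inter_restrict) (auto intro!: sum.cong)
  also have "\<dots> = (\<Sum>a\<in>{..<n}. if a \<le> k then of_nat (a+1) * u (a+1) * EE n u $ (k - a) else 0)"
    by (subst Int_commute, subst sum.inter_restrict) (auto intro!: sum.cong)
  also have "\<dots> = (\<Sum>a\<in>{..<n}. of_nat (a+1) * u (a+1) * schur_p n u (int (Suc k) - int (a+1)))"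
    by (rule sum.cong) (auto simp: P_def2 nat_diff_distrib)
  also have "\<dots> = (\<Sum>i=1..n. of_nat i * u i * schur_p n u (int (Suc k) - int i))"
  proof -
    have "{1..n} = Suc ` {..<n}" by (auto simp: image_iff) (metis Suc_pred' lessThan_iff less_Suc_eq_le less_eq_Suc_le)
    then show ?thesis by (simp add: sum.reindex)
  qed
  finally show ?thesis .
qed

lemma recur: "of_int k * schur_p n u k = (\<Sum>i=1..n. of_nat i * u i * schur_p n u (k - int i))"
proof (cases "k \<le> 0")
  case True
  then have "schur_p n u (k - int i) = 0" if "i \<in> {1..n}" for i using that by (simp add: P_neg)
  moreover have "of_int k * schur_p n u k = 0" using True by (cases "k = 0") (auto simp: P_neg)
  ultimately show ?thesis by simp
next
  case False
  then obtain k' where k: "k = int (Suc k')" by (metis gr0_implies_Suc not_le pos_int_cases of_nat_0_less_iff)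
  have h: "of_int (int (Suc k')) * schur_p n u (int (Suc k')) = of_nat (Suc k') * EE n u $ Suc k'"
    by (simp add: P_def2 del: of_nat_Suc)
  show ?thesis unfolding k using h recur_nat[of k' n u] by (rule trans)
qed

lemma upd_deriv: "((\<lambda>y. (u(j:=y)) i) has_field_derivative (if i = j then 1 else 0)) (at x)"
  by (cases "i = j") (auto intro!: derivative_eq_intros)

lemma Dnat:
  assumes j: "1 \<le> j" "j \<le> n"
  shows "((\<lambda>y. schur_p n (u(j:=y)) (int k)) has_field_derivative schur_p n u (int k - int j)) (at (u j))"
proof (induction k arbitrary: u rule: less_induct)
  case (less k)
  show ?case
  proof (cases "k = 0")
    case True
    then show ?thesis using j by (simp add: P_0 P_neg)
  next
    case False
    have Di: "((\<lambda>y. schur_p n (u(j:=y)) (int k - int i)) has_field_derivative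
                schur_p n u (int k - int i - int j)) (at (u j))" if i: "i \<in> {1..n}" for i
    proof (cases "int k - int i < 0")
      case True
      then show ?thesis using j by (simp add: P_neg)
    next
      case False
      then have e: "int k - int i = int (nat (int k - int i))" by simp
      have "nat (int k - int i) < k" using i False by auto
      from less[OF this, of u] show ?thesis unfolding e[symmetric] .
    qed
    have f: "schur_p n (u(j:=y)) (int k) = (1 / of_nat k) *
         (\<Sum>i=1..n. of_nat i * (u(j:=y)) i * schur_p n (u(j:=y)) (int k - int i))" for y
      using recur[of "int k" n "u(j:=y)"] False by (simp add: field_simps)
    have D: "((\<lambda>y. (1 / of_nat k) *
         (\<Sum>i=1..n. of_nat i * (u(j:=y)) i * schur_p n (u(j:=y)) (int k - int i)))
         has_field_derivative (1 / of_nat k) *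
         (\<Sum>i=1..n. of_nat i * ((if i = j then 1 else 0) * schur_p n u (int k - int i)
            + u i * schur_p n u (int k - int i - int j)))) (at (u j))"
    proof (intro DERIV_cmult DERIV_sum)
      fix i assume i: "i \<in> {1..n}"
      have g: "(\<lambda>y. of_nat i * (u(j:=y)) i * schur_p n (u(j:=y)) (int k - int i)) =
            (\<lambda>y. of_nat i * ((u(j:=y)) i * schur_p n (u(j:=y)) (int k - int i)))"
        by (simp add: mult.assoc)
      show "((\<lambda>y. of_nat i * (u(j:=y)) i * schur_p n (u(j:=y)) (int k - int i)) has_field_derivative
           of_nat i * ((if i = j then 1 else 0) * schur_p n u (int k - int i)
            + u i * schur_p n u (int k - int i - int j))) (at (u j))"
        unfolding g
        by (rule DERIV_cmult[OF DERIV_mult[OF upd_deriv Di[OF i]], THEN DERIV_cong]) (simp add: algebra_simps)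
    qed
    have s1: "(\<Sum>i=1..n. of_nat i * ((if i = j then 1 else 0) * schur_p n u (int k - int i)))
          = of_nat j * schur_p n u (int k - int j)"
    proof -
      have "(\<Sum>i=1..n. of_nat i * ((if i = j then 1 else 0) * schur_p n u (int k - int i)))
          = (\<Sum>i=1..n. if i = j then of_nat i * schur_p n u (int k - int i) else 0)"
        by (rule sum.cong) auto
      then show ?thesis using j by (simp add: sum.delta)
    qed
    have s2: "(\<Sum>i=1..n. of_nat i * (u i * schur_p n u (int k - int i - int j)))
          = of_int (int k - int j) * schur_p n u (int k - int j)"
      using recur[of "int k - int j" n u] by (simp add: algebra_simps)
    have val: "(1 / of_nat k) *
         (\<Sum>i=1..n. of_nat i * ((if i = j then 1 else 0) * schur_p n u (int k - int i)
            + u i * schur_p n u (int k - int i - int j))) = schur_p n u (int k - int j)"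
    proof -
      have "(\<Sum>i=1..n. of_nat i * ((if i = j then 1 else 0) * schur_p n u (int k - int i)
            + u i * schur_p n u (int k - int i - int j))) =
          of_nat j * schur_p n u (int k - int j) + of_int (int k - int j) * schur_p n u (int k - int j)"
        by (simp only: distrib_left sum.distrib s1 s2)
      also have "\<dots> = of_nat k * schur_p n u (int k - int j)" by (simp add: algebra_simps)
      finally show ?thesis using False by simp
    qed
    have fe: "(\<lambda>y. schur_p n (u(j:=y)) (int k)) = (\<lambda>y. (1 / of_nat k) *
         (\<Sum>i=1..n. of_nat i * (u(j:=y)) i * schur_p n (u(j:=y)) (int k - int i)))"
      by (rule ext, rule f)
    show ?thesis unfolding fe using D val by (rule DERIV_cong)
  qed
qed

lemma Dint:
  assumes j: "1 \<le> j" "j \<le> n"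
  shows "((\<lambda>y. schur_p n (u(j:=y)) k) has_field_derivative schur_p n u (k - int j)) (at (u j))"
proof (cases "k < 0")
  case True then show ?thesis using j by (simp add: P_neg)
next
  case False
  then have e: "k = int (nat k)" by simp
  show ?thesis using Dnat[OF j, of u "nat k"] unfolding e[symmetric] .
qed

definition gg :: "nat \<Rightarrow> nat \<Rightarrow> (nat \<Rightarrow> complex) \<Rightarrow> nat \<Rightarrow> (nat \<Rightarrow> complex) \<Rightarrow> complex" where
  "gg n m t d u = (\<Sum>k=0..m. t k * schur_p n u (int k - int d))"

lemma pv_gg: assumes "1 \<le> n" shows "partial_var 1 (gg n m t d) = gg n m t (Suc d)"
proof
  fix u
  have "((\<lambda>x. gg n m t d (u(1:=x))) has_field_derivative gg n m t (Suc d) u) (at (u 1))"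
    unfolding gg_def
    apply (rule DERIV_sum)
    apply (rule DERIV_cmult[THEN DERIV_cong])
     apply (rule Dint[OF _ assms])
     apply simp
    apply (simp add: algebra_simps)
    done
  then show "partial_var 1 (gg n m t d) u = gg n m t (Suc d) u"
    unfolding partial_var_def by (rule DERIV_imp_deriv)
qed

lemma iter_gg: assumes "1 \<le> n" shows "(partial_var 1 ^^ d) (schur_h n m t) = gg n m t d"
proof (induction d)
  case 0
  then show ?case by (auto simp: gg_def schur_h_def)
next
  case (Suc d)
  then show ?case using pv_gg[OF assms] by simp
qed

lemma pv_Phi: assumes "1 \<le> i" "i \<le> n"
  shows "partial_var i (schur_Phi n m t) u = (\<Sum>k=0..m. t k * schur_p n u (int k + 1 - int i))"
proof -
  have "((\<lambda>x. schur_Phi n m t (u(i:=x))) has_field_derivative (\<Sum>k=0..m. t k * schur_p n u (int k + 1 - int i))) (at (u i))"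
    unfolding schur_Phi_def
    apply (rule DERIV_sum)
    apply (rule DERIV_cmult)
    apply (rule Dint[OF assms])
    done
  then show ?thesis unfolding partial_var_def by (rule DERIV_imp_deriv)
qed

lemma SS_neg: "SS n (\<lambda>i. - u i) = - SS n u"
  unfolding SS_def sum_negf[symmetric] by (rule sum.cong) (auto simp: fps_eq_iff)

lemma EE_inv: "EE n (\<lambda>i. - u i) * EE n u = 1"
proof -
  have d1: "fps_deriv (EE n (\<lambda>i. - u i)) = - fps_deriv (SS n u) * EE n (\<lambda>i. - u i)"
    using EE_deriv[of n "\<lambda>i. - u i"] by (simp add: SS_neg)
  have "fps_deriv (EE n (\<lambda>i. - u i) * EE n u) = 0"
    unfolding fps_deriv_mult d1 EE_deriv[of n u] by (simp add: algebra_simps)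
  then have "EE n (\<lambda>i. - u i) * EE n u = fps_const ((EE n (\<lambda>i. - u i) * EE n u) $ 0)"
    by (simp only: fps_deriv_eq_0_iff)
  then show ?thesis by (simp add: EE0)
qed

lemma conv0: assumes "N \<ge> 1"
  shows "(\<Sum>a=0..N. EE n (\<lambda>i. - u i) $ a * EE n u $ (N - a)) = 0"
proof -
  have "(EE n (\<lambda>i. - u i) * EE n u) $ N = 0" using assms by (simp add: EE_inv)
  then show ?thesis by (simp add: fps_mult_nth)
qed

lemma partii:
  assumes "d < n" "n \<le> m"
  shows "(\<Sum>k=0..m. (if k \<le> n then (-1) ^ k * schur_e n u (n - k) else 0) * schur_p n u (int k - int d)) = 0"
proof -
  define Q where "Q a = schur_p n (\<lambda>i. - u i) (int a)" for a
  define N where "N = n - d"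
  have N: "N \<ge> 1" using assms by (simp add: N_def)
  have "(\<Sum>k=0..m. (if k \<le> n then (-1) ^ k * schur_e n u (n - k) else 0) * schur_p n u (int k - int d))
      = (\<Sum>k=0..n. (if k \<le> n then (-1) ^ k * schur_e n u (n - k) else 0) * schur_p n u (int k - int d))"
    by (rule sum.mono_neutral_right) (use assms in auto)
  also have "\<dots> = (\<Sum>k=0..n. (-1) ^ n * (Q (n - k) * schur_p n u (int k - int d)))"
  proof (rule sum.cong)
    fix k assume k: "k \<in> {0..n}"
    have "(-1::complex) ^ k * (-1) ^ (n - k) = (-1) ^ n" using k by (simp add: power_add[symmetric])
    then show "(if k \<le> n then (-1) ^ k * schur_e n u (n - k) else 0) * schur_p n u (int k - int d) =
       (-1) ^ n * (Q (n - k) * schur_p n u (int k - int d))"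
      using k unfolding schur_e_def Q_def by (simp add: mult.assoc[symmetric])
  qed simp
  also have "\<dots> = (-1) ^ n * (\<Sum>k=0..n. Q (n - k) * schur_p n u (int k - int d))"
    by (simp add: sum_distrib_left)
  also have "(\<Sum>k=0..n. Q (n - k) * schur_p n u (int k - int d)) = (\<Sum>a=0..n. Q a * schur_p n u (int (n - a) - int d))"
    by (subst sum.atLeastAtMost_rev) (rule sum.cong, auto)
  also have "\<dots> = (\<Sum>a=0..N. Q a * schur_p n u (int (n - a) - int d))"
    by (rule sum.mono_neutral_right) (use assms in \<open>auto simp: N_def P_neg\<close>)
  also have "\<dots> = (\<Sum>a=0..N. EE n (\<lambda>i. - u i) $ a * EE n u $ (N - a))"
    by (rule sum.cong) (use assms in \<open>auto simp: N_def P_def2 Q_def nat_diff_distrib add.commute\<close>)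
  also have "\<dots> = 0" by (rule conv0[OF N])
  finally show ?thesis by simp
qed


theorem mainTheorem5:
  fixes n m :: nat
  assumes "n \<ge> 1" and "m \<ge> n"
  shows "(\<forall>(t :: nat \<Rightarrow> complex) (u :: nat \<Rightarrow> complex).
            (\<forall>i\<in>{1..n}. \<forall>j\<in>{1..n}. i > j \<longrightarrow> schur_H n m t u i j = 0)
          \<and> (\<forall>i\<in>{1..n}. \<forall>j\<in>{1..n}. i \<le> j \<longrightarrow>
               schur_H n m t u i j = (partial_var 1 ^^ (j - i)) (schur_h n m t) u)
          \<and> ((\<forall>i\<in>{1..n}. partial_var i (schur_Phi n m t) u = 0) \<longleftrightarrow>
               (\<forall>i\<in>{1..n}. \<forall>j\<in>{1..n}. schur_H n m t u i j = 0)))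
       \<and> (\<forall>u :: nat \<Rightarrow> complex.
            let t = (\<lambda>k. if k \<le> n then (-1) ^ k * schur_e n u (n - k) else 0)
            in \<forall>i\<in>{1..n}. \<forall>j\<in>{1..n}. schur_H n m t u i j = 0)"
proof -
  have H_lt: "schur_H n m t u i j = 0" if "i > j" for t u i j
    using that by (simp add: schur_H_def schur_A_def)
  have H_le: "schur_H n m t u i j = gg n m t (j - i) u" if "i \<le> j" for t u i j
    using that by (simp add: schur_H_def schur_A_def gg_def of_nat_diff algebra_simps)
  have P1: "(\<forall>(t :: nat \<Rightarrow> complex) (u :: nat \<Rightarrow> complex).
            (\<forall>i\<in>{1..n}. \<forall>j\<in>{1..n}. i > j \<longrightarrow> schur_H n m t u i j = 0)
          \<and> (\<forall>i\<in>{1..n}. \<forall>j\<in>{1..n}. i \<le> j \<longrightarrow>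
               schur_H n m t u i j = (partial_var 1 ^^ (j - i)) (schur_h n m t) u)
          \<and> ((\<forall>i\<in>{1..n}. partial_var i (schur_Phi n m t) u = 0) \<longleftrightarrow>
               (\<forall>i\<in>{1..n}. \<forall>j\<in>{1..n}. schur_H n m t u i j = 0)))"
  proof (intro allI conjI)
    fix t u :: "nat \<Rightarrow> complex"
    show "\<forall>i\<in>{1..n}. \<forall>j\<in>{1..n}. i > j \<longrightarrow> schur_H n m t u i j = 0"
      using H_lt by blast
    show "\<forall>i\<in>{1..n}. \<forall>j\<in>{1..n}. i \<le> j \<longrightarrow>
               schur_H n m t u i j = (partial_var 1 ^^ (j - i)) (schur_h n m t) u"
      using H_le iter_gg[OF assms(1)] by simp
    have phiH: "partial_var i (schur_Phi n m t) u = schur_H n m t u 1 i" if "i \<in> {1..n}" for i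
      using that by (simp add: pv_Phi H_le gg_def of_nat_diff algebra_simps)
    have ggH: "gg n m t d u = schur_H n m t u 1 (d + 1)" for d
      by (simp add: H_le)
    show "(\<forall>i\<in>{1..n}. partial_var i (schur_Phi n m t) u = 0) \<longleftrightarrow>
               (\<forall>i\<in>{1..n}. \<forall>j\<in>{1..n}. schur_H n m t u i j = 0)"
    proof
      assume A: "\<forall>i\<in>{1..n}. partial_var i (schur_Phi n m t) u = 0"
      show "\<forall>i\<in>{1..n}. \<forall>j\<in>{1..n}. schur_H n m t u i j = 0"
      proof (intro ballI)
        fix i j assume i: "i \<in> {1..n}" and j: "j \<in> {1..n}"
        show "schur_H n m t u i j = 0"
        proof (cases "i \<le> j")
          case True
          have "j - i + 1 \<in> {1..n}" using i j True by auto
          then show ?thesis using A phiH H_le[OF True] ggH by metis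
        qed (simp add: H_lt)
      qed
    next
      assume B: "\<forall>i\<in>{1..n}. \<forall>j\<in>{1..n}. schur_H n m t u i j = 0"
      show "\<forall>i\<in>{1..n}. partial_var i (schur_Phi n m t) u = 0"
        using B phiH assms(1) by auto
    qed
  qed
  have P2: "\<forall>u :: nat \<Rightarrow> complex.
            let t = (\<lambda>k. if k \<le> n then (-1) ^ k * schur_e n u (n - k) else 0)
            in \<forall>i\<in>{1..n}. \<forall>j\<in>{1..n}. schur_H n m t u i j = 0"
  proof (intro allI, unfold Let_def, intro ballI)
    fix u :: "nat \<Rightarrow> complex" and i j assume i: "i \<in> {1..n}" and j: "j \<in> {1..n}"
    show "schur_H n m (\<lambda>k. if k \<le> n then (-1) ^ k * schur_e n u (n - k) else 0) u i j = 0"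
    proof (cases "i \<le> j")
      case True
      have "j - i < n" using i j by auto
      then show ?thesis using partii[OF _ assms(2), of "j - i" u] by (simp add: H_le[OF True] gg_def)
    qed (simp add: H_lt)
  qed
  show ?thesis using P1 P2 by blast
qed

end
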